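(* Fix integers $n,d\ge 1$, constants $0<h_{min}<h_{max}$, an initial state $\mathcal{X}^{(0)}=[\mathbf{x}_1^{(0)},\ldots,\mathbf{x}_n^{(0)}]\in\mathbb{R}^{dn}$, an initial bandwidth $h_1\in[h_{min},h_{max}]$, and a non-negative sequence $(\nu_k)$ with $\nu_k\to 0$. Let $(\mathcal{X}^{(k)},h_k)$ be generated by the Doubly Stochastic Mean-Shift (DSMS) process described in the context. Then almost surely, for every $k\ge 1$, $$\mathbb{E}\left[L_{h_{k+1}}(\mathcal{X}^{(k+1)})\,\middle|\,\mathcal{X}^{(k)},\,h_k\right]\ \ge\ L_{h_k}(\mathcal{X}^{(k)}).$$ Consequently, the sequence $\left(L_{h_k}(\mathcal{X}^{(k)})\right)_k$ is a discrete-time non-negative submartingale adapted to the process $(\mathcal{X}^{(k)},h_k)$.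
   Context: A profile function is a map $k:[0,\infty)\to\mathbb{R}_+$ that vanishes on $[1,\infty)$, is $C^1$, non-increasing and convex, with $k'(t)<0$ for all $t\in[0,1)$ (e.g. $k(t)=(1-t)_+^{\alpha}$, $\alpha=2,3,4$). The associated kernel on $\mathbb{R}^d$ is $K(\mathbf{u})=k(\|\mathbf{u}\|^2)$ and the weight function is $G(\mathbf{u})=-k'(\|\mathbf{u}\|^2)\ge 0$; $\|\cdot\|$ is the Euclidean norm. A state is $\mathcal{X}=[\mathbf{x}_1,\ldots,\mathbf{x}_n]\in\mathbb{R}^{dn}$ with $\mathbf{x}_i\in\mathbb{R}^d$. For $h>0$ define the cost $L_h(\mathcal{X})=\sum_{1\le i\le j\le n}K\big((\mathbf{x}_i-\mathbf{x}_j)/h\big)$ and the mean-shift operator $$\mathcal{S}_h(x;\mathcal{X})=\frac{\sum_{i=1}^n G\big((x-\mathbf{x}_i)/h\big)\,\mathbf{x}_i}{\sum_{i=1}^n G\big((x-\mathbf{x}_i)/h\big)},\quad x\in\mathbb{R}^d.$$ DSMS process: given $\mathcal{X}^{(0)}$, $h_1\in[h_{min},h_{max}]$ and $(\nu_k)$, for $k=0,1,2,\ldots$: if $k\ge1$, set $\delta_k=\min\{\nu_k,\ (h_k/h_{min})^2-1,\ 1-(h_k/h_{max})^2\}$, draw $\alpha_k$ uniformly on $(1-\delta_k,1+\delta_k)$ (with $\alpha_k=1$ if $\delta_k=0$), and set $h_{k+1}=h_k/\sqrt{\alpha_k}$ (so $h_{k+1}\in[h_{min},h_{max}]$); draw an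 index $i_k$ uniformly from $\{1,\ldots,n\}$; then set $\mathbf{x}_{i_k}^{(k+1)}=\mathcal{S}_{h_{k+1}}(\mathbf{x}_{i_k}^{(k)};\mathcal{X}^{(k)})$ and $\mathbf{x}_j^{(k+1)}=\mathbf{x}_j^{(k)}$ for $j\ne i_k$. The indices $i_k$ are i.i.d., independent of each other and of all previous choices, and the sequences $(i_k)$ and $(h_k)$ are independent. *)

theory Defs
  imports "HOL-Probability.Probability"
begin

definition profile :: "(real \<Rightarrow> real) \<Rightarrow> (real \<Rightarrow> real) \<Rightarrow> bool" where
  "profile k k' \<longleftrightarrow>
     (\<forall>t\<ge>0. k t \<ge> 0) \<and>
     (\<forall>t\<ge>1. k t = 0) \<and>
     (\<forall>t\<ge>0. (k has_real_derivative k' t) (at t within {0..})) \<and>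
     continuous_on {0..} k' \<and>
     (\<forall>s t. 0 \<le> s \<longrightarrow> s \<le> t \<longrightarrow> k t \<le> k s) \<and>
     convex_on {0..} k \<and>
     (\<forall>t. 0 \<le> t \<longrightarrow> t < 1 \<longrightarrow> k' t < 0)"

definition kern :: "(real \<Rightarrow> real) \<Rightarrow> 'd::euclidean_space \<Rightarrow> real" where
  "kern k u = k (norm u ^ 2)"

definition weight :: "(real \<Rightarrow> real) \<Rightarrow> 'd::euclidean_space \<Rightarrow> real" where
  "weight k' u = - k' (norm u ^ 2)"

(* A state [x_1,...,x_n] in R^{dn}: points in 'd (R^d, d = DIM('d)) indexed by the
   finite type 'n (n = CARD('n)); the linear order on 'n only serves to express i \<le> j. *)

definition cost :: "(real \<Rightarrow> real) \<Rightarrow> real \<Rightarrow> ('d::euclidean_space)^('n::{finite,linorder}) \<Rightarrow> real" where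
  "cost k h X = (\<Sum>(i,j)\<in>{(i,j). i \<le> j}. kern k ((X$i - X$j) /\<^sub>R h))"

definition mean_shift :: "(real \<Rightarrow> real) \<Rightarrow> real \<Rightarrow> 'd::euclidean_space \<Rightarrow> 'd^('n::finite) \<Rightarrow> 'd" where
  "mean_shift k' h x X =
     (\<Sum>i\<in>UNIV. weight k' ((x - X$i) /\<^sub>R h) *\<^sub>R X$i) /\<^sub>R (\<Sum>i\<in>UNIV. weight k' ((x - X$i) /\<^sub>R h))"

(* Bandwidth sequence, as a function of the realisation u of the auxiliary uniform
   variables: alpha_k = 1 + delta_k * u_k with u_k uniform on (-1,1), so that alpha_k is
   uniform on (1-delta_k, 1+delta_k) given the past.  dsms_h (Suc k) = h_{k+1};
   dsms_h 0 = dsms_h 1 = h_1 (h_0 does not occur in the paper; it is a dummy). *)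
primrec dsms_h :: "real \<Rightarrow> real \<Rightarrow> (nat \<Rightarrow> real) \<Rightarrow> real \<Rightarrow> (nat \<Rightarrow> real) \<Rightarrow> nat \<Rightarrow> real" where
  "dsms_h hmin hmax \<nu> h1 u 0 = h1"
| "dsms_h hmin hmax \<nu> h1 u (Suc k) =
     (if k = 0 then h1 else
        (let hk = dsms_h hmin hmax \<nu> h1 u k;
             \<delta> = min (\<nu> k) (min ((hk / hmin)^2 - 1) (1 - (hk / hmax)^2));
             \<alpha> = 1 + \<delta> * u k
         in hk / sqrt \<alpha>))"

primrec dsms_X :: "(real \<Rightarrow> real) \<Rightarrow> real \<Rightarrow> real \<Rightarrow> (nat \<Rightarrow> real) \<Rightarrow> real \<Rightarrow>
    ('d::euclidean_space)^('n::finite) \<Rightarrow> (nat \<Rightarrow> real) \<Rightarrow> (nat \<Rightarrow> 'n) \<Rightarrow> nat \<Rightarrow> 'd^'n" where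
  "dsms_X k' hmin hmax \<nu> h1 X0 u ii 0 = X0"
| "dsms_X k' hmin hmax \<nu> h1 X0 u ii (Suc k) =
     (let Y = dsms_X k' hmin hmax \<nu> h1 X0 u ii k;
          h' = dsms_h hmin hmax \<nu> h1 u (Suc k)
      in (\<chi> j. if j = ii k then mean_shift k' h' (Y$(ii k)) Y else Y$j))"

definition submartingale_from :: "'a measure \<Rightarrow> nat \<Rightarrow> (nat \<Rightarrow> 'a measure) \<Rightarrow> (nat \<Rightarrow> 'a \<Rightarrow> real) \<Rightarrow> bool" where
  "submartingale_from M m F Y \<longleftrightarrow>
     (\<forall>k\<ge>m. sigma_finite_subalgebra M (F k)) \<and>
     (\<forall>k\<ge>m. sets (F k) \<subseteq> sets (F (Suc k))) \<and>
     (\<forall>k\<ge>m. Y k \<in> borel_measurable (F k)) \<and>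
     (\<forall>k\<ge>m. integrable M (Y k)) \<and>
     (\<forall>k\<ge>m. AE \<omega> in M. real_cond_exp M (F k) (Y (Suc k)) \<omega> \<ge> Y k \<omega>)"

end

theory Submission
  imports Defs
begin


lemma prof_cont:
  assumes "profile k k'" shows "continuous_on {0..} k"
proof -
  have "\<forall>t\<in>{0..}. continuous (at t within {0..}) k"
    using assms unfolding profile_def by (auto intro: DERIV_continuous)
  then show ?thesis using continuous_on_eq_continuous_within by blast
qed

lemma prof_tangent_pos:
  assumes p: "profile k k'" and c: "0 < c" and x: "0 \<le> x"
  shows "k' c * (x - c) \<le> k x - k c"
proof (rule convex_on_imp_above_tangent[where A="{0..}"])
  show "convex_on {0..} k" using p unfolding profile_def by auto
  show "connected {0::real..}" by simp
  show "c \<in> interior {0..}" using c by simp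
  show "x \<in> {0..}" using x by simp
  show "(k has_field_derivative k' c) (at c within {0..})" using p c unfolding profile_def by auto
qed

lemma prof_tangent:
  assumes p: "profile k k'" and c: "0 \<le> c" and x: "0 \<le> x"
  shows "k' c * (x - c) \<le> k x - k c"
proof (cases "c = 0")
  case False thus ?thesis using prof_tangent_pos[OF p _ x] c by simp
next
  case True
  have cont: "continuous_on (closure {0<..}) (\<lambda>c. k x - k c - k' c * (x - c))"
    using p prof_cont[OF p] unfolding profile_def
    by (auto intro!: continuous_intros)
  have "0 \<le> (\<lambda>c. k x - k c - k' c * (x - c)) c"
    by (rule continuous_ge_on_closure[OF cont]) (use c prof_tangent_pos[OF p _ x] in auto)
  thus ?thesis by simp
qed

lemma prof_k_nonneg: "profile k k' \<Longrightarrow> 0 \<le> t \<Longrightarrow> 0 \<le> k t"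
  unfolding profile_def by auto

lemma prof_k_le0: "profile k k' \<Longrightarrow> 0 \<le> t \<Longrightarrow> k t \<le> k 0"
  unfolding profile_def by auto

lemma prof_deriv_nonpos:
  assumes p: "profile k k'" and c: "0 \<le> c" shows "k' c \<le> 0"
proof (rule ccontr)
  assume "\<not> k' c \<le> 0"
  hence pos: "k' c > 0" by simp
  have "k' c * ((c+1) - c) \<le> k (c+1) - k c" using prof_tangent[OF p c, of "c+1"] c by simp
  moreover have "k (c+1) \<le> k c" using p c unfolding profile_def by auto
  ultimately show False using pos by simp
qed

lemma prof_deriv0: "profile k k' \<Longrightarrow> k' 0 < 0"
  unfolding profile_def by auto

lemma prof_slope_bound:
  assumes p: "profile k k'" and c: "0 \<le> c" shows "\<bar>k' c * c\<bar> \<le> k 0"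
proof -
  have "k' c * (0 - c) \<le> k 0 - k c" using prof_tangent[OF p c, of 0] by simp
  moreover have "0 \<le> k c" using p c by (rule prof_k_nonneg)
  moreover have "k' c * c \<le> 0" using prof_deriv_nonpos[OF p c] c by (simp add: mult_nonpos_nonneg)
  ultimately show ?thesis by (simp add: abs_if algebra_simps)
qed



lemma weighted_identity:
  fixes p q :: "'a::real_inner" and z :: "'i \<Rightarrow> 'a" and G :: "'i \<Rightarrow> real"
  assumes fin: "finite S" and W: "(\<Sum>b\<in>S. G b) *\<^sub>R q = (\<Sum>b\<in>S. G b *\<^sub>R z b)"
  shows "(\<Sum>b\<in>S. G b * ((norm (p - z b))\<^sup>2 - (norm (q - z b))\<^sup>2)) = (\<Sum>b\<in>S. G b) * (norm (p - q))\<^sup>2"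
proof -
  have eq: "\<And>b. (norm (p - z b))\<^sup>2 - (norm (q - z b))\<^sup>2 = (norm (p - q))\<^sup>2 + 2 * ((p - q) \<bullet> (q - z b))"
    by (simp add: power2_norm_eq_inner inner_diff_left inner_diff_right inner_commute algebra_simps)
  have "(\<Sum>b\<in>S. G b * ((norm (p - z b))\<^sup>2 - (norm (q - z b))\<^sup>2))
      = (\<Sum>b\<in>S. G b) * (norm (p - q))\<^sup>2 + 2 * ((p - q) \<bullet> (\<Sum>b\<in>S. G b *\<^sub>R (q - z b)))"
  proof -
    have "(\<Sum>b\<in>S. G b * ((norm (p - z b))\<^sup>2 - (norm (q - z b))\<^sup>2))
        = (\<Sum>b\<in>S. G b * (norm (p - q))\<^sup>2 + 2 * (G b * ((p - q) \<bullet> (q - z b))))"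
      unfolding eq by (simp add: algebra_simps)
    also have "\<dots> = (\<Sum>b\<in>S. G b) * (norm (p - q))\<^sup>2 + 2 * (\<Sum>b\<in>S. G b * ((p - q) \<bullet> (q - z b)))"
      by (simp add: sum.distrib sum_distrib_left sum_distrib_right)
    also have "(\<Sum>b\<in>S. G b * ((p - q) \<bullet> (q - z b))) = (p - q) \<bullet> (\<Sum>b\<in>S. G b *\<^sub>R (q - z b))"
      by (simp add: inner_sum_right)
    finally show ?thesis .
  qed
  also have "(\<Sum>b\<in>S. G b *\<^sub>R (q - z b)) = (\<Sum>b\<in>S. G b) *\<^sub>R q - (\<Sum>b\<in>S. G b *\<^sub>R z b)"
    by (simp add: scaleR_diff_right sum_subtractf scaleR_sum_left)
  also have "\<dots> = 0" using W by simp
  finally show ?thesis by simp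
qed

lemma kern_minus: "kern k (- v) = kern k v"
  unfolding kern_def by simp

lemma kern_nonneg: "profile k k' \<Longrightarrow> 0 \<le> kern k v"
  unfolding kern_def by (rule prof_k_nonneg) auto

lemma weight_nonneg: "profile k k' \<Longrightarrow> 0 \<le> weight k' v"
  unfolding weight_def using prof_deriv_nonpos[of k k' "(norm v)\<^sup>2"] by auto

lemma weight_zero_pos: "profile k k' \<Longrightarrow> 0 < weight k' 0"
  unfolding weight_def using prof_deriv0[of k k'] by auto

lemma cost_nonneg: "profile k k' \<Longrightarrow> 0 \<le> cost k h X"
  unfolding cost_def by (rule sum_nonneg) (auto intro: kern_nonneg)

lemma ascent:
  fixes Y :: "('d::euclidean_space)^('n::{finite,linorder})"
  assumes p: "profile k k'"
  shows "cost k h Y \<le> cost k h (\<chi> j. if j = i then mean_shift k' h (Y$i) Y else Y$j)"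
proof -
  define x' where "x' = mean_shift k' h (Y$i) Y"
  define Y' where "Y' = (\<chi> j. if j = i then x' else Y$j)"
  define f where "f = (\<lambda>(a,b). kern k ((Y'$a - Y'$b) /\<^sub>R h) - kern k ((Y$a - Y$b) /\<^sub>R h))"
  define \<phi> where "\<phi> = (\<lambda>b. kern k ((Y'$i - Y'$b) /\<^sub>R h) - kern k ((Y$i - Y$b) /\<^sub>R h))"
  define G where "G = (\<lambda>b. weight k' ((Y$i - Y$b) /\<^sub>R h))"
  define pp where "pp = Y$i /\<^sub>R h"
  define q where "q = x' /\<^sub>R h"
  define z where "z = (\<lambda>b. Y$b /\<^sub>R h)"
  define \<psi> where "\<psi> = (\<lambda>b. G b * ((norm (pp - z b))\<^sup>2 - (norm (q - z b))\<^sup>2))"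
  let ?P = "{(a::'n,b). a \<le> b}"
  have diff: "cost k h Y' - cost k h Y = (\<Sum>x\<in>?P. f x)"
    unfolding cost_def f_def by (simp add: sum_subtractf case_prod_beta)
  have "(\<Sum>x\<in>?P. f x) = (\<Sum>x\<in>Pair i ` {i..} \<union> (\<lambda>a. (a,i)) ` {..<i}. f x)"
  proof (rule sum.mono_neutral_right)
    show "finite ?P" by simp
    show "Pair i ` {i..} \<union> (\<lambda>a. (a,i)) ` {..<i} \<subseteq> ?P" by auto
    show "\<forall>x\<in>?P - (Pair i ` {i..} \<union> (\<lambda>a. (a,i)) ` {..<i}). f x = 0"
    proof
      fix x assume x: "x \<in> ?P - (Pair i ` {i..} \<union> (\<lambda>a. (a,i)) ` {..<i})"
      obtain a b where ab: "x = (a,b)" by force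
      have ai: "a \<noteq> i"
      proof
        assume "a = i"
        hence "x \<in> Pair i ` {i..}" using x ab by auto
        thus False using x by blast
      qed
      have "b \<noteq> i"
      proof
        assume "b = i"
        hence "a < i" using x ab ai by auto
        hence "x \<in> (\<lambda>a. (a,i)) ` {..<i}" using ab \<open>b = i\<close> by auto
        thus False using x by blast
      qed
      note ai this
      thus "f x = 0" unfolding ab f_def Y'_def by simp
    qed
  qed
  also have "\<dots> = (\<Sum>x\<in>Pair i ` {i..}. f x) + (\<Sum>x\<in>(\<lambda>a. (a,i)) ` {..<i}. f x)"
    by (rule sum.union_disjoint) auto
  also have "(\<Sum>x\<in>Pair i ` {i..}. f x) = (\<Sum>b\<in>{i..}. \<phi> b)"
    by (subst sum.reindex) (auto simp: inj_on_def f_def \<phi>_def)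
  also have "(\<Sum>x\<in>(\<lambda>a. (a,i)) ` {..<i}. f x) = (\<Sum>b\<in>{..<i}. \<phi> b)"
  proof (subst sum.reindex)
    show "inj_on (\<lambda>a. (a, i)) {..<i}" by (auto simp: inj_on_def)
    have "\<And>b. f (b,i) = \<phi> b"
      unfolding f_def \<phi>_def
      by (metis (no_types, lifting) case_prod_conv kern_minus minus_diff_eq scaleR_minus_right)
    thus "sum (f \<circ> (\<lambda>a. (a, i))) {..<i} = sum \<phi> {..<i}" by simp
  qed
  also have "(\<Sum>b\<in>{i..}. \<phi> b) + (\<Sum>b\<in>{..<i}. \<phi> b) = (\<Sum>b\<in>UNIV. \<phi> b)"
  proof -
    have u: "UNIV = {i..} \<union> {..<i}" by auto
    have "sum \<phi> ({i..} \<union> {..<i}) = sum \<phi> {i..} + sum \<phi> {..<i}"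
      by (rule sum.union_disjoint) auto
    thus ?thesis using u by simp
  qed
  also have "(\<Sum>b\<in>UNIV. \<phi> b) \<ge> (\<Sum>b\<in>UNIV. \<psi> b)"
  proof (rule sum_mono)
    fix b
    show "\<psi> b \<le> \<phi> b"
    proof (cases "b = i")
      case True
      have "\<phi> b = 0" unfolding \<phi>_def True by simp
      moreover have "\<psi> b \<le> 0" unfolding \<psi>_def True
        by (simp add: G_def pp_def z_def, intro mult_nonneg_nonneg weight_nonneg[OF p] zero_le_power2)
      ultimately show ?thesis by simp
    next
      case False
      have e1: "(Y$i - Y$b) /\<^sub>R h = pp - z b" by (simp add: pp_def z_def scaleR_diff_right)
      have e2: "(Y'$i - Y'$b) /\<^sub>R h = q - z b" using False by (simp add: Y'_def q_def z_def scaleR_diff_right)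
      have "k' ((norm (pp - z b))\<^sup>2) * ((norm (q - z b))\<^sup>2 - (norm (pp - z b))\<^sup>2)
              \<le> k ((norm (q - z b))\<^sup>2) - k ((norm (pp - z b))\<^sup>2)"
        by (rule prof_tangent[OF p]) auto
      thus ?thesis unfolding \<phi>_def \<psi>_def G_def e1 e2 kern_def weight_def by (simp add: algebra_simps)
    qed
  qed
  also have "(\<Sum>b\<in>UNIV. \<psi> b) = (\<Sum>b\<in>UNIV. G b) * (norm (pp - q))\<^sup>2"
    unfolding \<psi>_def
  proof (rule weighted_identity)
    have Wpos: "0 < (\<Sum>b\<in>UNIV. G b)"
    proof -
      have "(\<Sum>b\<in>UNIV. G b) = G i + (\<Sum>b\<in>UNIV - {i}. G b)"
        by (simp add: sum.remove)
      moreover have "0 < G i" unfolding G_def using weight_zero_pos[OF p] by simp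
      moreover have "0 \<le> (\<Sum>b\<in>UNIV - {i}. G b)" unfolding G_def by (rule sum_nonneg) (use weight_nonneg[OF p] in auto)
      ultimately show ?thesis by simp
    qed
    have "x' = (\<Sum>b\<in>UNIV. G b *\<^sub>R Y$b) /\<^sub>R (\<Sum>b\<in>UNIV. G b)"
      unfolding x'_def mean_shift_def G_def by simp
    hence "(\<Sum>b\<in>UNIV. G b) *\<^sub>R x' = (\<Sum>b\<in>UNIV. G b *\<^sub>R Y$b)" using Wpos by simp
    hence "(\<Sum>b\<in>UNIV. G b) *\<^sub>R q = (\<Sum>b\<in>UNIV. G b *\<^sub>R Y$b) /\<^sub>R h"
      unfolding q_def by (metis scaleR_scaleR mult.commute)
    thus "(\<Sum>b\<in>UNIV. G b) *\<^sub>R q = (\<Sum>b\<in>UNIV. G b *\<^sub>R z b)"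
      by (simp add: z_def scaleR_sum_right scaleR_scaleR mult.commute)
  qed simp
  also have "\<dots> \<ge> 0" unfolding G_def by (intro mult_nonneg_nonneg sum_nonneg weight_nonneg[OF p] zero_le_power2)
  finally show ?thesis using diff unfolding Y'_def x'_def by simp
qed



definition dl :: "real \<Rightarrow> real \<Rightarrow> real \<Rightarrow> real \<Rightarrow> real" where
  "dl hmin hmax nu hk = min nu (min ((hk / hmin)^2 - 1) (1 - (hk / hmax)^2))"

lemma dl_bounds:
  assumes "0 < hmin" "hmin < hmax" "hmin \<le> hk" "hk \<le> hmax" "0 \<le> nu"
  shows "0 \<le> dl hmin hmax nu hk" "dl hmin hmax nu hk \<le> (hk/hmin)^2 - 1"
        "dl hmin hmax nu hk \<le> 1 - (hk/hmax)^2" "dl hmin hmax nu hk < 1"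
proof -
  have a: "1 \<le> hk / hmin" using assms by simp
  have "1 \<le> (hk/hmin)^2" using a by (metis one_le_power)
  moreover have "hk / hmax \<le> 1" using assms by simp
  moreover have "0 < hk / hmax" using assms by simp
  ultimately have b: "(hk/hmax)^2 \<le> 1" "0 < (hk/hmax)^2" "1 \<le> (hk/hmin)^2"
    by (auto simp: power_le_one)
  show "0 \<le> dl hmin hmax nu hk" using b assms unfolding dl_def by auto
  show "dl hmin hmax nu hk \<le> (hk/hmin)^2 - 1" unfolding dl_def by linarith
  show c: "dl hmin hmax nu hk \<le> 1 - (hk/hmax)^2" unfolding dl_def by linarith
  show "dl hmin hmax nu hk < 1" using c b(2) by linarith
qed

lemma h_step:
  assumes "0 < hmin" "hmin < hmax" "hmin \<le> hk" "hk \<le> hmax" "0 \<le> nu" "\<bar>u\<bar> < 1"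
  defines "\<alpha> \<equiv> 1 + dl hmin hmax nu hk * u"
  shows "0 < \<alpha>" "hmin \<le> hk / sqrt \<alpha>" "hk / sqrt \<alpha> \<le> hmax"
proof -
  note d = dl_bounds[OF assms(1-5)]
  let ?d = "dl hmin hmax nu hk"
  have "\<bar>?d * u\<bar> \<le> ?d" using d(1) assms(6) by (simp add: abs_mult mult_left_le)
  hence al: "1 - ?d \<le> \<alpha>" "\<alpha> \<le> 1 + ?d" unfolding \<alpha>_def by auto
  show ap: "0 < \<alpha>" using al d by linarith
  have hk: "0 < hk" using assms by simp
  have a1: "\<alpha> \<le> (hk/hmin)^2" using al d by linarith
  have "sqrt \<alpha> \<le> hk / hmin" by (rule real_le_lsqrt[OF _ a1]) (use hk assms(1) in simp)
  hence "hmin * sqrt \<alpha> \<le> hk" using assms(1) by (simp add: field_simps)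
  thus "hmin \<le> hk / sqrt \<alpha>" using ap by (simp add: field_simps)
  have a2: "(hk/hmax)^2 \<le> \<alpha>" using al d by linarith
  have "hk / hmax \<le> sqrt \<alpha>" by (rule real_le_rsqrt[OF a2])
  hence "hk \<le> hmax * sqrt \<alpha>" using assms by (simp add: field_simps)
  thus "hk / sqrt \<alpha> \<le> hmax" using ap by (simp add: field_simps)
qed

lemma dsms_h_Suc:
  "1 \<le> j \<Longrightarrow> dsms_h hmin hmax \<nu> h1 u (Suc j) =
     dsms_h hmin hmax \<nu> h1 u j / sqrt (1 + dl hmin hmax (\<nu> j) (dsms_h hmin hmax \<nu> h1 u j) * u j)"
  by (simp add: dl_def Let_def)

lemma h_bounds:
  assumes "0 < hmin" "hmin < hmax" "hmin \<le> h1" "h1 \<le> hmax" "\<forall>j. 0 \<le> \<nu> j" "\<forall>m. \<bar>u m\<bar> < 1"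
  shows "hmin \<le> dsms_h hmin hmax \<nu> h1 u j \<and> dsms_h hmin hmax \<nu> h1 u j \<le> hmax"
proof (induction j)
  case 0 thus ?case using assms by simp
next
  case (Suc j)
  show ?case
  proof (cases "j = 0")
    case True thus ?thesis using assms by simp
  next
    case False
    hence "1 \<le> j" by simp
    show ?thesis unfolding dsms_h_Suc[OF \<open>1 \<le> j\<close>]
      using h_step[OF assms(1,2) _ _ _ assms(6)[rule_format, of j]] Suc assms(5) by simp
  qed
qed

lemma norm_scale_sqrt:
  fixes v :: "'a::real_normed_vector"
  assumes "0 < \<alpha>" "0 < h"
  shows "(norm (v /\<^sub>R (h / sqrt \<alpha>)))^2 = \<alpha> * (norm (v /\<^sub>R h))^2"
  using assms by (simp add: power_divide power_mult_distrib field_simps)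

definition slope :: "(real \<Rightarrow> real) \<Rightarrow> real \<Rightarrow> ('d::euclidean_space)^('n::{finite,linorder}) \<Rightarrow> real" where
  "slope k' h X = (\<Sum>(a,b)\<in>{(a,b). a \<le> b}. k' ((norm ((X$a - X$b) /\<^sub>R h))^2) * (norm ((X$a - X$b) /\<^sub>R h))^2)"

lemma jensen_step:
  fixes X :: "('d::euclidean_space)^('n::{finite,linorder})"
  assumes p: "profile k k'" and "0 < \<alpha>" "0 < h"
  shows "cost k h X + (\<alpha> - 1) * slope k' h X \<le> cost k (h / sqrt \<alpha>) X"
proof -
  let ?c = "\<lambda>x. (norm ((X$fst x - X$snd x) /\<^sub>R h))^2"
  have c1: "cost k (h / sqrt \<alpha>) X = (\<Sum>x\<in>{(a,b). a \<le> b}. k (\<alpha> * ?c x))"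
    unfolding cost_def kern_def norm_scale_sqrt[OF assms(2,3)] by (simp add: case_prod_beta)
  have c2: "cost k h X = (\<Sum>x\<in>{(a,b). a \<le> b}. k (?c x))"
    unfolding cost_def kern_def by (simp add: case_prod_beta)
  have c3: "slope k' h X = (\<Sum>x\<in>{(a,b). a \<le> b}. k' (?c x) * ?c x)"
    unfolding slope_def by (simp add: case_prod_beta)
  have "cost k (h / sqrt \<alpha>) X - cost k h X - (\<alpha> - 1) * slope k' h X
     = (\<Sum>x\<in>{(a,b). a \<le> b}. k (\<alpha> * ?c x) - k (?c x) - (\<alpha> - 1) * (k' (?c x) * ?c x))"
    unfolding c1 c2 c3 by (simp add: sum_subtractf sum_distrib_left)
  also have "\<dots> = (\<Sum>x\<in>{(a,b). a \<le> b}. k (\<alpha> * ?c x) - k (?c x) - k' (?c x) * (\<alpha> * ?c x - ?c x))"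
    by (rule sum.cong) (simp_all add: algebra_simps)
  also have "\<dots> \<ge> 0"
  proof (rule sum_nonneg)
    fix x :: "'n \<times> 'n"
    have "k' (?c x) * (\<alpha> * ?c x - ?c x) \<le> k (\<alpha> * ?c x) - k (?c x)"
      by (rule prof_tangent[OF p]) (use assms in auto)
    thus "0 \<le> k (\<alpha> * ?c x) - k (?c x) - k' (?c x) * (\<alpha> * ?c x - ?c x)" by simp
  qed
  finally show ?thesis by simp
qed

lemma slope_bound:
  fixes X :: "('d::euclidean_space)^('n::{finite,linorder})"
  assumes p: "profile k k'"
  shows "\<bar>slope k' h X\<bar> \<le> real (CARD('n) * CARD('n)) * k 0"
proof -
  have "\<bar>slope k' h X\<bar> \<le> (\<Sum>x\<in>{(a::'n,b). a \<le> b}. k 0)"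
    unfolding slope_def
    by (rule order_trans[OF sum_abs sum_mono]) (auto intro!: prof_slope_bound[OF p])
  also have "\<dots> = real (card {(a::'n,b). a \<le> b}) * k 0" by simp
  also have "\<dots> \<le> real (CARD('n) * CARD('n)) * k 0"
  proof (rule mult_right_mono)
    have "card {(a::'n,b). a \<le> b} \<le> card ((UNIV :: 'n set) \<times> (UNIV :: 'n set))" by (rule card_mono) auto
    thus "real (card {(a::'n,b). a \<le> b}) \<le> real (CARD('n) * CARD('n))"
      unfolding card_cartesian_product of_nat_mult[symmetric] of_nat_le_iff .
    show "0 \<le> k 0" using prof_k_nonneg[OF p] by simp
  qed
  finally show ?thesis .
qed



lemma meas_vec_nth[measurable (raw)]:
  fixes f :: "'a \<Rightarrow> 'b::{real_normed_vector,second_countable_topology}^'n"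
  shows "f \<in> borel_measurable M \<Longrightarrow> (\<lambda>x. f x $ i) \<in> borel_measurable M"
  by (rule borel_measurable_continuous_on[where f="\<lambda>x. x $ i"])
     (auto intro: linear_continuous_on bounded_linear_vec_nth)

definition vupd :: "'n \<Rightarrow> 'b \<Rightarrow> 'b^'n \<Rightarrow> 'b^'n" where
  "vupd i a Y = (\<chi> j. if j = i then a else Y$j)"

lemma meas_vupd[measurable (raw)]:
  fixes f :: "'a \<Rightarrow> 'b::euclidean_space" and g :: "'a \<Rightarrow> 'b^'n::finite"
  assumes "f \<in> borel_measurable M" "g \<in> borel_measurable M"
  shows "(\<lambda>x. vupd i (f x) (g x)) \<in> borel_measurable M"
proof (rule borel_measurable_continuous_Pair[OF assms])
  show "continuous_on UNIV (\<lambda>x. vupd i (fst x) (snd x))"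
    unfolding vupd_def
    apply (intro continuous_on_vec_lambda)
    subgoal for j
      by (cases "j = i") (auto intro!: continuous_intros linear_continuous_on
            bounded_linear_compose[OF bounded_linear_vec_nth bounded_linear_snd] bounded_linear_fst)
    done
qed

lemma kern_cont:
  assumes p: "profile k k'" shows "continuous_on UNIV (kern k :: 'a::euclidean_space \<Rightarrow> real)"
proof -
  have "continuous_on UNIV (\<lambda>u::'a. k ((norm u)^2))"
    by (rule continuous_on_compose2[OF prof_cont[OF p]]) (auto intro!: continuous_intros)
  thus ?thesis unfolding kern_def[abs_def] .
qed

lemma weight_cont:
  assumes p: "profile k k'" shows "continuous_on UNIV (weight k' :: 'a::euclidean_space \<Rightarrow> real)"
proof -
  have c: "continuous_on {0..} k'" using p unfolding profile_def by auto
  have "continuous_on UNIV (\<lambda>u::'a. k' ((norm u)^2))"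
    by (rule continuous_on_compose2[OF c]) (auto intro!: continuous_intros)
  hence "continuous_on UNIV (\<lambda>u::'a. - k' ((norm u)^2))" by (intro continuous_intros)
  thus ?thesis unfolding weight_def[abs_def] .
qed

lemma kern_meas: "profile k k' \<Longrightarrow> (kern k :: 'a::euclidean_space \<Rightarrow> real) \<in> borel_measurable borel"
  by (rule borel_measurable_continuous_onI[OF kern_cont])

lemma weight_meas: "profile k k' \<Longrightarrow> (weight k' :: 'a::euclidean_space \<Rightarrow> real) \<in> borel_measurable borel"
  by (rule borel_measurable_continuous_onI[OF weight_cont])

lemma cost_meas:
  fixes Xf :: "'a \<Rightarrow> ('d::euclidean_space)^('n::{finite,linorder})"
  assumes p: "profile k k'" and [measurable]: "H \<in> borel_measurable N" "Xf \<in> borel_measurable N"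
  shows "(\<lambda>\<omega>. cost k (H \<omega>) (Xf \<omega>)) \<in> borel_measurable N"
proof -
  note [measurable] = kern_meas[OF p, where 'a='d]
  show ?thesis unfolding cost_def case_prod_beta by measurable
qed

lemma slope_alt: "slope k' h X = (\<Sum>(a,b)\<in>{(a,b). a \<le> b}. - weight k' ((X$a - X$b) /\<^sub>R h) * (norm ((X$a - X$b) /\<^sub>R h))^2)"
  unfolding slope_def weight_def by simp

lemma slope_meas:
  fixes Xf :: "'a \<Rightarrow> ('d::euclidean_space)^('n::{finite,linorder})"
  assumes p: "profile k k'" and [measurable]: "H \<in> borel_measurable N" "Xf \<in> borel_measurable N"
  shows "(\<lambda>\<omega>. slope k' (H \<omega>) (Xf \<omega>)) \<in> borel_measurable N"
proof -
  note [measurable] = weight_meas[OF p, where 'a='d]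
  show ?thesis unfolding slope_alt case_prod_beta by measurable
qed

lemma mean_shift_meas:
  fixes Xf :: "'a \<Rightarrow> ('d::euclidean_space)^('n::finite)"
  assumes p: "profile k k'" and [measurable]: "H \<in> borel_measurable N" "x \<in> borel_measurable N" "Xf \<in> borel_measurable N"
  shows "(\<lambda>\<omega>. mean_shift k' (H \<omega>) (x \<omega>) (Xf \<omega>)) \<in> borel_measurable N"
proof -
  note [measurable] = weight_meas[OF p, where 'a='d]
  show ?thesis unfolding mean_shift_def by measurable
qed

lemma dsms_h_meas:
  assumes "\<And>m. m < j \<Longrightarrow> (\<lambda>\<omega>. U m \<omega>) \<in> borel_measurable N"
  shows "(\<lambda>\<omega>. dsms_h hmin hmax \<nu> h1 (\<lambda>m. U m \<omega>) j) \<in> borel_measurable N"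
  using assms
proof (induction j)
  case 0 thus ?case by simp
next
  case (Suc j)
  have [measurable]: "(\<lambda>\<omega>. dsms_h hmin hmax \<nu> h1 (\<lambda>m. U m \<omega>) j) \<in> borel_measurable N"
    using Suc by simp
  have [measurable]: "(\<lambda>\<omega>. U j \<omega>) \<in> borel_measurable N" using Suc by simp
  show ?case
  proof (cases "j = 0")
    case True thus ?thesis by simp
  next
    case False thus ?thesis by (simp add: Let_def) measurable
  qed
qed

lemma dsms_X_meas:
  fixes X0 :: "('d::euclidean_space)^('n::finite)"
  assumes p: "profile k k'"
    and "\<And>m. m < j \<Longrightarrow> (\<lambda>\<omega>. U m \<omega>) \<in> borel_measurable N"
    and "\<And>m. m < j \<Longrightarrow> (\<lambda>\<omega>. I m \<omega>) \<in> measurable N (count_space UNIV)"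
  shows "(\<lambda>\<omega>. dsms_X k' hmin hmax \<nu> h1 X0 (\<lambda>m. U m \<omega>) (\<lambda>m. I m \<omega>) j) \<in> borel_measurable N"
  using assms(2,3)
proof (induction j)
  case 0 thus ?case by simp
next
  case (Suc j)
  have Y[measurable]: "(\<lambda>\<omega>. dsms_X k' hmin hmax \<nu> h1 X0 (\<lambda>m. U m \<omega>) (\<lambda>m. I m \<omega>) j) \<in> borel_measurable N"
    using Suc by simp
  have H[measurable]: "(\<lambda>\<omega>. dsms_h hmin hmax \<nu> h1 (\<lambda>m. U m \<omega>) (Suc j)) \<in> borel_measurable N"
    by (rule dsms_h_meas) (use Suc in simp)
  have Ij: "(\<lambda>\<omega>. I j \<omega>) \<in> measurable N (count_space UNIV)" using Suc by simp
  let ?Y = "\<lambda>\<omega>. dsms_X k' hmin hmax \<nu> h1 X0 (\<lambda>m. U m \<omega>) (\<lambda>m. I m \<omega>) j"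
  let ?H = "\<lambda>\<omega>. dsms_h hmin hmax \<nu> h1 (\<lambda>m. U m \<omega>) (Suc j)"
  have eq: "(\<lambda>\<omega>. dsms_X k' hmin hmax \<nu> h1 X0 (\<lambda>m. U m \<omega>) (\<lambda>m. I m \<omega>) (Suc j))
      = (\<lambda>\<omega>. (\<lambda>i \<omega>. vupd i (mean_shift k' (?H \<omega>) (?Y \<omega> $ i) (?Y \<omega>)) (?Y \<omega>)) (I j \<omega>) \<omega>)"
    by (simp add: Let_def vupd_def)
  show ?case unfolding eq
  proof (rule measurable_compose_countable'[OF _ Ij])
    fix i :: 'n
    have [measurable]: "(\<lambda>\<omega>. mean_shift k' (?H \<omega>) (?Y \<omega> $ i) (?Y \<omega>)) \<in> borel_measurable N"
      by (rule mean_shift_meas[OF p]) measurable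
    show "(\<lambda>\<omega>. vupd i (mean_shift k' (?H \<omega>) (?Y \<omega> $ i) (?Y \<omega>)) (?Y \<omega>)) \<in> borel_measurable N"
      by measurable
  qed simp
qed



lemma uniform_mean_zero:
  "(\<integral>x. x \<partial>uniform_measure lborel {-1<..<(1::real)}) = 0"
proof -
  let ?S = "{-1<..<(1::real)}"
  have um: "uniform_measure lborel ?S = density lborel (\<lambda>x. ennreal (indicator ?S x / 2))"
    unfolding uniform_measure_def
    by (intro arg_cong2[where f=density] refl ext)
       (simp add: divide_ennreal[symmetric] split: split_indicator)
  have e1: "(\<integral>x. x \<partial>uniform_measure lborel ?S) = (\<integral>x. indicator ?S x / 2 * x \<partial>lborel)"
    unfolding um by (subst integral_density) auto
  have "(\<integral>x. indicator ?S x / 2 * x \<partial>lborel) = \<bar>-1\<bar> *\<^sub>R (\<integral>x. indicator ?S (0 + (-1) * x) / 2 * (0 + (-1) * x) \<partial>lborel)"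
    by (rule lborel_integral_real_affine) simp
  also have "\<dots> = - (\<integral>x. indicator ?S x / 2 * x \<partial>lborel)"
    by (simp add: indicator_def conj_commute)
  finally have "(\<integral>x. indicator ?S x / 2 * x \<partial>lborel) = 0" by linarith
  thus ?thesis using e1 by simp
qed

lemma U_facts:
  fixes U :: "'a \<Rightarrow> real"
  assumes P: "prob_space M" and rv: "U \<in> borel_measurable M"
    and d: "distr M borel U = uniform_measure lborel {-1<..<1}"
  shows "AE \<omega> in M. U \<omega> \<in> {-1<..<1}" "integrable M U" "(\<integral>\<omega>. U \<omega> \<partial>M) = 0"
proof -
  show ae: "AE \<omega> in M. U \<omega> \<in> {-1<..<1}"
  proof (rule AE_distrD[OF rv])
    show "AE x in distr M borel U. x \<in> {-1<..<1}" unfolding d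
      by (rule AE_uniform_measureI) auto
  qed
  show "integrable M U"
  proof (rule Bochner_Integration.integrable_bound[where f="\<lambda>_. 1::real"])
    show "integrable M (\<lambda>_. 1::real)" using P by (simp add: prob_space_def finite_measure.integrable_const)
    show "U \<in> borel_measurable M" by (rule rv)
    show "AE x in M. norm (U x) \<le> norm (1::real)" using ae by eventually_elim auto
  qed
  have "(\<integral>\<omega>. U \<omega> \<partial>M) = (\<integral>x. x \<partial>distr M borel U)"
    by (subst integral_distr[OF rv]) auto
  thus "(\<integral>\<omega>. U \<omega> \<partial>M) = 0" unfolding d using uniform_mean_zero by simp
qed



lemma Int_stable_preimages: "Int_stable {f -` A \<inter> S | A. A \<in> sets N}"
proof (rule Int_stableI)
  fix a b assume "a \<in> {f -` A \<inter> S | A. A \<in> sets N}" "b \<in> {f -` A \<inter> S | A. A \<in> sets N}"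
  then obtain A B where "a = f -` A \<inter> S" "A \<in> sets N" "b = f -` B \<inter> S" "B \<in> sets N" by auto
  thus "a \<inter> b \<in> {f -` A \<inter> S | A. A \<in> sets N}" by (intro CollectI exI[of _ "A \<inter> B"]) auto
qed

lemma (in prob_space) indep_setup:
  fixes U :: "nat \<Rightarrow> 'a \<Rightarrow> real" and I :: "nat \<Rightarrow> 'a \<Rightarrow> 'n"
  assumes U_indep: "indep_vars (\<lambda>_. borel) U UNIV"
    and UI_indep: "indep_set
                     (sets (vimage_algebra (space M) (\<lambda>\<omega> j. U j \<omega>) (Pi\<^sub>M UNIV (\<lambda>_. borel))))
                     (sets (vimage_algebra (space M) (\<lambda>\<omega> j. I j \<omega>) (Pi\<^sub>M UNIV (\<lambda>_. count_space UNIV))))"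
    and intU: "integrable M (U j)"
    and I_rv: "\<And>m. I m \<in> measurable M (count_space UNIV)"
  obtains N where "space N = space M" "sets N \<subseteq> sets M"
    "\<And>m. m < j \<Longrightarrow> (\<lambda>\<omega>. U m \<omega>) \<in> borel_measurable N"
    "\<And>m. (\<lambda>\<omega>. I m \<omega>) \<in> measurable N (count_space UNIV)"
    "\<And>g. g \<in> borel_measurable N \<Longrightarrow> integrable M g \<Longrightarrow>
        (\<integral>\<omega>. g \<omega> * U j \<omega> \<partial>M) = (\<integral>\<omega>. g \<omega> \<partial>M) * (\<integral>\<omega>. U j \<omega> \<partial>M)"
proof -
  define EU where "EU = (\<lambda>m. {U m -` A \<inter> space M | A. A \<in> sets borel})"
  define VU where "VU = vimage_algebra (space M) (\<lambda>\<omega> j. U j \<omega>) (Pi\<^sub>M UNIV (\<lambda>_. borel::real measure))"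
  define VI where "VI = vimage_algebra (space M) (\<lambda>\<omega> j. I j \<omega>) (Pi\<^sub>M UNIV (\<lambda>_. count_space (UNIV::'n set)))"
  have rvU: "\<And>m. random_variable borel (U m)" and indU: "indep_sets EU UNIV"
    using U_indep unfolding indep_vars_def2 EU_def by auto
  have spVU: "space VU = space M" and spVI: "space VI = space M" unfolding VU_def VI_def by simp_all
  have UVU: "(\<lambda>\<omega>. U m \<omega>) \<in> borel_measurable VU" for m
  proof -
    have "(\<lambda>\<omega> j. U j \<omega>) \<in> measurable VU (Pi\<^sub>M UNIV (\<lambda>_. borel::real measure))"
      unfolding VU_def by (rule measurable_vimage_algebra1) (auto simp: space_PiM)
    from measurable_compose[OF this measurable_component_singleton[of m UNIV "\<lambda>_. borel::real measure"]]
    show ?thesis by simp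
  qed
  have IVI: "(\<lambda>\<omega>. I m \<omega>) \<in> measurable VI (count_space UNIV)" for m
  proof -
    have "(\<lambda>\<omega> j. I j \<omega>) \<in> measurable VI (Pi\<^sub>M UNIV (\<lambda>_. count_space (UNIV::'n set)))"
      unfolding VI_def by (rule measurable_vimage_algebra1) (auto simp: space_PiM)
    from measurable_compose[OF this measurable_component_singleton[of m UNIV "\<lambda>_. count_space (UNIV::'n set)"]]
    show ?thesis by simp
  qed
  have EU_VU: "EU m \<subseteq> sets VU" for m
    using measurable_sets[OF UVU[of m]] unfolding EU_def spVU by auto
  have VU_ev: "sets VU \<subseteq> events"
    unfolding VU_def
    by (rule sets_image_in_sets[OF refl], rule measurable_PiM_single') (use rvU in auto)
  have VI_ev: "sets VI \<subseteq> events"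
  proof -
    have "(\<lambda>\<omega> j. I j \<omega>) \<in> measurable M (Pi\<^sub>M UNIV (\<lambda>_. count_space (UNIV::'n set)))"
      by (rule measurable_PiM_single') (use I_rv in auto)
    thus ?thesis unfolding VI_def by (rule sets_image_in_sets[OF refl])
  qed
  have prodUI: "\<And>a b. a \<in> sets VU \<Longrightarrow> b \<in> sets VI \<Longrightarrow> prob (a \<inter> b) = prob a * prob b"
    using UI_indep unfolding indep_sets2_eq VU_def VI_def by auto
  define SA where "SA = sigma_sets (space M) (EU j)"
  define SB where "SB = sigma_sets (space M) (\<Union>i\<in>{..<j}. EU i)"
  have col: "indep_sets (\<lambda>b. sigma_sets (space M) (\<Union>i\<in>(if b then {j} else {..<j}). EU i)) UNIV"
  proof (rule indep_sets_collect_sigma)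
    show "indep_sets EU (\<Union>b\<in>UNIV. if b then {j} else {..<j})"
      by (rule indep_sets_mono_index[OF _ indU]) auto
    show "Int_stable (EU i)" for i
      unfolding EU_def by (rule Int_stable_preimages)
    show "disjoint_family_on (\<lambda>b. if b then {j} else {..<j}) UNIV"
      unfolding disjoint_family_on_def by auto
  qed
  have "indep_set SA SB"
    unfolding indep_set_def
    by (rule indep_sets_cong[THEN iffD1, OF refl _ col]) (auto simp: SA_def SB_def split: bool.split)
  hence prodAB: "\<And>a b. a \<in> SA \<Longrightarrow> b \<in> SB \<Longrightarrow> prob (a \<inter> b) = prob a * prob b"
    and SA_ev: "SA \<subseteq> events" and SB_ev: "SB \<subseteq> events"
    unfolding indep_sets2_eq by auto
  have SA_VU: "SA \<subseteq> sets VU" unfolding SA_def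
    using sets.sigma_sets_subset[of "EU j" VU] EU_VU spVU by auto
  have SB_VU: "SB \<subseteq> sets VU" unfolding SB_def
    using sets.sigma_sets_subset[of "\<Union>i\<in>{..<j}. EU i" VU] EU_VU spVU by auto
  have EU_pow: "EU m \<subseteq> Pow (space M)" for m unfolding EU_def by auto
  interpret SBs: sigma_algebra "space M" SB
    unfolding SB_def by (rule sigma_algebra_sigma_sets) (use EU_pow in auto)
  define B where "B = {b \<inter> c | b c. b \<in> SB \<and> c \<in> sets VI}"
  have B_ev: "B \<subseteq> events" unfolding B_def using SB_ev VI_ev by auto
  have B_pow: "B \<subseteq> Pow (space M)" using B_ev sets.sets_into_space by auto
  have EUj_ev: "EU j \<subseteq> events" using EU_VU VU_ev by auto
  have "indep_set (EU j) B"
    unfolding indep_sets2_eq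
  proof (intro conjI ballI EUj_ev B_ev)
    fix a x assume a: "a \<in> EU j" and x: "x \<in> B"
    then obtain b c where x: "x = b \<inter> c" and b: "b \<in> SB" and c: "c \<in> sets VI" unfolding B_def by auto
    have aSA: "a \<in> SA" using a unfolding SA_def by auto
    have aVU: "a \<in> sets VU" using a EU_VU by auto
    have bVU: "b \<in> sets VU" using b SB_VU by auto
    have "prob (a \<inter> x) = prob ((a \<inter> b) \<inter> c)" unfolding x by (simp add: Int_assoc)
    also have "\<dots> = prob (a \<inter> b) * prob c" using prodUI aVU bVU c by auto
    also have "\<dots> = prob a * prob b * prob c" using prodAB[OF aSA b] by simp
    also have "prob x = prob b * prob c" unfolding x using prodUI bVU c by auto
    ultimately show "prob (a \<inter> x) = prob a * prob x" by simp
  qed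
  hence indAB: "indep_set SA (sigma_sets (space M) B)"
    unfolding SA_def
  proof (rule indep_set_sigma_sets)
    show "Int_stable (EU j)" unfolding EU_def by (rule Int_stable_preimages)
    show "Int_stable B" unfolding Int_stable_def B_def
    proof (safe)
      fix b1 c1 b2 c2 assume "b1 \<in> SB" "c1 \<in> sets VI" "b2 \<in> SB" "c2 \<in> sets VI"
      thus "\<exists>b c. b1 \<inter> c1 \<inter> (b2 \<inter> c2) = b \<inter> c \<and> b \<in> SB \<and> c \<in> sets VI"
        by (intro exI[of _ "b1 \<inter> b2"] exI[of _ "c1 \<inter> c2"]) auto
    qed
  qed
  define N where "N = sigma (space M) B"
  have spN: "space N = space M" unfolding N_def using B_pow by simp
  have setsN: "sets N = sigma_sets (space M) B" unfolding N_def using B_pow by simp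
  have subN: "sets N \<subseteq> sets M" unfolding setsN using sets.sigma_sets_subset[of B M] B_ev by simp
  have topSB: "space M \<in> SB" by (rule SBs.top)
  have topVI: "space M \<in> sets VI" using sets.top[of VI] spVI by simp
  show ?thesis
  proof (rule that[OF spN subN])
    fix m assume "m < j"
    show "(\<lambda>\<omega>. U m \<omega>) \<in> borel_measurable N"
    proof (rule measurableI)
      fix A :: "real set" assume "A \<in> sets borel"
      hence "U m -` A \<inter> space M \<in> SB" unfolding SB_def EU_def using \<open>m < j\<close> by blast
      hence "(U m -` A \<inter> space M) \<inter> space M \<in> B" unfolding B_def using topVI by blast
      thus "(\<lambda>\<omega>. U m \<omega>) -` A \<inter> space N \<in> sets N" unfolding setsN spN by (auto simp: Int_absorb2)
    qed simp
  next
    fix m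
    show "(\<lambda>\<omega>. I m \<omega>) \<in> measurable N (count_space UNIV)"
    proof (rule measurableI)
      fix A :: "'n set" assume "A \<in> sets (count_space UNIV)"
      hence "(\<lambda>\<omega>. I m \<omega>) -` A \<inter> space M \<in> sets VI" using measurable_sets[OF IVI[of m]] spVI by auto
      hence "space M \<inter> ((\<lambda>\<omega>. I m \<omega>) -` A \<inter> space M) \<in> B" unfolding B_def using topSB by blast
      thus "(\<lambda>\<omega>. I m \<omega>) -` A \<inter> space N \<in> sets N" unfolding setsN spN by (auto simp: Int_absorb1)
    qed simp
  next
    fix g :: "'a \<Rightarrow> real" assume g: "g \<in> borel_measurable N" and gi: "integrable M g"
    have subalg: "subalgebra M N" unfolding subalgebra_def using spN subN by simp
    have gM: "g \<in> borel_measurable M" by (rule measurable_from_subalg[OF subalg g])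
    have "indep_var borel (U j) borel g"
      unfolding indep_var_eq
    proof (intro conjI rvU gM)
      have s1: "sigma_sets (space M) {U j -` A \<inter> space M |A. A \<in> sets borel} = SA"
        unfolding SA_def EU_def ..
      have s2: "sigma_sets (space M) {g -` A \<inter> space M |A. A \<in> sets borel} \<subseteq> sigma_sets (space M) B"
      proof -
        have "{g -` A \<inter> space M |A. A \<in> sets borel} \<subseteq> sets N"
          using measurable_sets[OF g] spN by auto
        hence "sigma_sets (space N) {g -` A \<inter> space M |A. A \<in> sets borel} \<subseteq> sets N"
          by (rule sets.sigma_sets_subset)
        thus ?thesis using spN setsN by simp
      qed
      show "indep_set (sigma_sets (space M) {U j -` A \<inter> space M |A. A \<in> sets borel})
                      (sigma_sets (space M) {g -` A \<inter> space M |A. A \<in> sets borel})"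
        using indAB s2 unfolding s1 indep_sets2_eq by blast
    qed
    hence "(\<integral>\<omega>. U j \<omega> * g \<omega> \<partial>M) = (\<integral>\<omega>. U j \<omega> \<partial>M) * (\<integral>\<omega>. g \<omega> \<partial>M)"
      by (rule indep_var_lebesgue_integral[OF _ intU gi])
    thus "(\<integral>\<omega>. g \<omega> * U j \<omega> \<partial>M) = (\<integral>\<omega>. g \<omega> \<partial>M) * (\<integral>\<omega>. U j \<omega> \<partial>M)"
      by (simp add: mult.commute)
  qed
qed



lemma cond_exp_ge:
  fixes f g D V :: "'a \<Rightarrow> real"
  assumes sfs: "sigma_finite_subalgebra M F"
    and fi: "integrable M f" and gF: "g \<in> borel_measurable F" and gi: "integrable M g"
    and DV: "integrable M (\<lambda>\<omega>. D \<omega> * V \<omega>)"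
    and zero: "\<And>A. A \<in> sets F \<Longrightarrow> (\<integral>\<omega>. indicator A \<omega> * (D \<omega> * V \<omega>) \<partial>M) = 0"
    and ge: "AE \<omega> in M. g \<omega> + D \<omega> * V \<omega> \<le> f \<omega>"
  shows "AE \<omega> in M. g \<omega> \<le> real_cond_exp M F f \<omega>"
proof -
  interpret sigma_finite_subalgebra M F by (rule sfs)
  have c0: "AE \<omega> in M. real_cond_exp M F (\<lambda>\<omega>. D \<omega> * V \<omega>) \<omega> = (\<lambda>_. 0) \<omega>"
  proof (rule real_cond_exp_charact)
    fix A assume "A \<in> sets F"
    thus "(\<integral>x\<in>A. D x * V x \<partial>M) = (\<integral>x\<in>A. 0 \<partial>M)"
      using zero unfolding set_lebesgue_integral_def by simp
  qed (auto simp: DV)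
  have cadd: "AE \<omega> in M. real_cond_exp M F (\<lambda>\<omega>. g \<omega> + D \<omega> * V \<omega>) \<omega>
                = real_cond_exp M F g \<omega> + real_cond_exp M F (\<lambda>\<omega>. D \<omega> * V \<omega>) \<omega>"
    by (rule real_cond_exp_add[OF gi DV])
  have cg: "AE \<omega> in M. real_cond_exp M F g \<omega> = g \<omega>"
    by (rule real_cond_exp_F_meas[OF gi gF])
  have mono: "AE \<omega> in M. real_cond_exp M F (\<lambda>\<omega>. g \<omega> + D \<omega> * V \<omega>) \<omega> \<le> real_cond_exp M F f \<omega>"
    by (rule real_cond_exp_mono[OF ge _ fi]) (use gi DV in auto)
  from c0 cadd cg mono show ?thesis by eventually_elim simp
qed

lemma prob_sfs:
  assumes P: "prob_space M" and sub: "subalgebra M F"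
  shows "sigma_finite_subalgebra M F"
  unfolding sigma_finite_subalgebra_def
proof (intro conjI)
  show "subalgebra M F" by (rule sub)
  have top: "space M \<in> sets F" using sub unfolding subalgebra_def by (metis sets.top)
  have "emeasure (restr_to_subalg M F) (space (restr_to_subalg M F)) = emeasure M (space M)"
    using emeasure_restr_to_subalg[OF sub top] space_restr_to_subalg[of M F] by simp
  also have "\<dots> = 1" using P by (simp add: prob_space.emeasure_space_1)
  finally have "finite_measure (restr_to_subalg M F)" by (intro finite_measureI) simp
  thus "sigma_finite_measure (restr_to_subalg M F)" by (simp add: finite_measure_def)
qed

lemma cost_le:
  fixes X :: "('d::euclidean_space)^('n::{finite,linorder})"
  assumes p: "profile k k'"
  shows "cost k h X \<le> real (CARD('n) * CARD('n)) * k 0"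
proof -
  have "cost k h X \<le> (\<Sum>x\<in>{(a::'n,b). a \<le> b}. k 0)"
    unfolding cost_def kern_def
    by (rule sum_mono) (auto intro!: prof_k_le0[OF p])
  also have "\<dots> = real (card {(a::'n,b). a \<le> b}) * k 0" by simp
  also have "\<dots> \<le> real (CARD('n) * CARD('n)) * k 0"
  proof (rule mult_right_mono)
    have "card {(a::'n,b). a \<le> b} \<le> card ((UNIV :: 'n set) \<times> (UNIV :: 'n set))" by (rule card_mono) auto
    thus "real (card {(a::'n,b). a \<le> b}) \<le> real (CARD('n) * CARD('n))"
      unfolding card_cartesian_product of_nat_mult[symmetric] of_nat_le_iff .
    show "0 \<le> k 0" using prof_k_nonneg[OF p] by simp
  qed
  finally show ?thesis .
qed



lemma main_step:
  fixes k k' :: "real \<Rightarrow> real"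
    and hmin hmax h1 :: real
    and \<nu> :: "nat \<Rightarrow> real"
    and X0 :: "('d::euclidean_space)^('n::{finite,linorder})"
    and M :: "'a measure"
    and U :: "nat \<Rightarrow> 'a \<Rightarrow> real"
    and I :: "nat \<Rightarrow> 'a \<Rightarrow> 'n"
    and h :: "nat \<Rightarrow> 'a \<Rightarrow> real"
    and X :: "nat \<Rightarrow> 'a \<Rightarrow> ('d::euclidean_space)^('n::{finite,linorder})"
  assumes h_def: "h = (\<lambda>j \<omega>. dsms_h hmin hmax \<nu> h1 (\<lambda>m. U m \<omega>) j)"
    and X_def: "X = (\<lambda>j \<omega>. dsms_X k' hmin hmax \<nu> h1 X0 (\<lambda>m. U m \<omega>) (\<lambda>m. I m \<omega>) j)"
    and prof: "profile k k'"
    and hmin: "0 < hmin" and hmm: "hmin < hmax"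
    and h1: "hmin \<le> h1" "h1 \<le> hmax"
    and \<nu>_nonneg: "\<forall>j. \<nu> j \<ge> 0"
    and P: "prob_space M"
    and U_rv: "\<forall>j. U j \<in> borel_measurable M"
    and U_unif: "\<forall>j. distr M borel (U j) = uniform_measure lborel {-1<..<1}"
    and I_rv: "\<forall>j. I j \<in> measurable M (count_space UNIV)"
    and U_indep: "prob_space.indep_vars M (\<lambda>_. borel) U UNIV"
    and UI_indep: "prob_space.indep_set M
                     (sets (vimage_algebra (space M) (\<lambda>\<omega> j. U j \<omega>) (Pi\<^sub>M UNIV (\<lambda>_. borel))))
                     (sets (vimage_algebra (space M) (\<lambda>\<omega> j. I j \<omega>) (Pi\<^sub>M UNIV (\<lambda>_. count_space UNIV))))"
    and j: "1 \<le> j"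
  obtains N where "space N = space M" "sets N \<subseteq> sets M"
    "\<And>i. i \<le> j \<Longrightarrow> (\<lambda>\<omega>. (X i \<omega>, h i \<omega>)) \<in> borel_measurable N"
    "\<And>F. space F = space M \<Longrightarrow> sets F \<subseteq> sets N \<Longrightarrow> (\<lambda>\<omega>. (X j \<omega>, h j \<omega>)) \<in> borel_measurable F \<Longrightarrow>
       AE \<omega> in M. cost k (h j \<omega>) (X j \<omega>) \<le> real_cond_exp M F (\<lambda>\<omega>. cost k (h (Suc j) \<omega>) (X (Suc j) \<omega>)) \<omega>"
proof -
  interpret prob_space M by (rule P)
  have Uf1: "AE \<omega> in M. U m \<omega> \<in> {-1<..<1}" for m
    by (rule U_facts(1)[OF P U_rv[rule_format, of m] U_unif[rule_format, of m]])
  have Uf2: "integrable M (U m)" for m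
    by (rule U_facts(2)[OF P U_rv[rule_format, of m] U_unif[rule_format, of m]])
  have Uf3: "(\<integral>\<omega>. U m \<omega> \<partial>M) = 0" for m
    by (rule U_facts(3)[OF P U_rv[rule_format, of m] U_unif[rule_format, of m]])
  note Uf = Uf1 Uf2 Uf3
  have good: "AE \<omega> in M. \<forall>m. U m \<omega> \<in> {-1<..<1}" using Uf(1) by (simp add: AE_all_countable)
  have hb: "hmin \<le> h i \<omega> \<and> h i \<omega> \<le> hmax" if "\<forall>m. U m \<omega> \<in> {-1<..<1}" for i \<omega>
    unfolding h_def by (rule h_bounds[OF hmin hmm h1 \<nu>_nonneg]) (use that in \<open>auto simp: abs_less_iff\<close>)
  obtain N where spN: "space N = space M" and subN: "sets N \<subseteq> sets M"
    and UN: "\<And>m. m < j \<Longrightarrow> (\<lambda>\<omega>. U m \<omega>) \<in> borel_measurable N"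
    and IN: "\<And>m. (\<lambda>\<omega>. I m \<omega>) \<in> measurable N (count_space UNIV)"
    and indN: "\<And>g. g \<in> borel_measurable N \<Longrightarrow> integrable M g \<Longrightarrow>
        (\<integral>\<omega>. g \<omega> * U j \<omega> \<partial>M) = (\<integral>\<omega>. g \<omega> \<partial>M) * (\<integral>\<omega>. U j \<omega> \<partial>M)"
    using indep_setup[where U=U and I=I and j=j, OF U_indep UI_indep Uf(2)[of j] I_rv[rule_format]] by blast
  have hN: "(\<lambda>\<omega>. h i \<omega>) \<in> borel_measurable N" if "i \<le> j" for i
    unfolding h_def by (rule dsms_h_meas) (use that UN in auto)
  have XN: "(\<lambda>\<omega>. X i \<omega>) \<in> borel_measurable N" if "i \<le> j" for i
    unfolding X_def by (rule dsms_X_meas[OF prof]) (use that UN IN in auto)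
  have ZN: "(\<lambda>\<omega>. (X i \<omega>, h i \<omega>)) \<in> borel_measurable N" if "i \<le> j" for i
  proof -
    have "(\<lambda>\<omega>. (X i \<omega>, h i \<omega>)) \<in> measurable N (borel \<Otimes>\<^sub>M borel)"
      by (rule measurable_Pair[OF XN[OF that] hN[OF that]])
    thus ?thesis by (simp add: borel_prod)
  qed
  show ?thesis
  proof (rule that[OF spN subN ZN])
    fix F assume spF: "space F = space M" and subF: "sets F \<subseteq> sets N"
      and ZF: "(\<lambda>\<omega>. (X j \<omega>, h j \<omega>)) \<in> borel_measurable F"
    have subMF: "subalgebra M F" unfolding subalgebra_def using spF subF subN by auto
    have subNF: "subalgebra N F" unfolding subalgebra_def using spF subF spN by auto
    have sfs: "sigma_finite_subalgebra M F" by (rule prob_sfs[OF P subMF])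
    have ZF': "(\<lambda>\<omega>. (X j \<omega>, h j \<omega>)) \<in> measurable F (borel \<Otimes>\<^sub>M borel)" using ZF by (simp add: borel_prod)
    have XF[measurable]: "(\<lambda>\<omega>. X j \<omega>) \<in> borel_measurable F"
      using measurable_compose[OF ZF' measurable_fst] by (simp add: comp_def)
    have hF[measurable]: "(\<lambda>\<omega>. h j \<omega>) \<in> borel_measurable F"
      using measurable_compose[OF ZF' measurable_snd] by (simp add: comp_def)
    define D where "D = (\<lambda>\<omega>. dl hmin hmax (\<nu> j) (h j \<omega>) * slope k' (h j \<omega>) (X j \<omega>))"
    have [measurable]: "(\<lambda>\<omega>. slope k' (h j \<omega>) (X j \<omega>)) \<in> borel_measurable F"
      by (rule slope_meas[OF prof hF XF])
    have DF: "D \<in> borel_measurable F" unfolding D_def dl_def by measurable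
    have YF: "(\<lambda>\<omega>. cost k (h j \<omega>) (X j \<omega>)) \<in> borel_measurable F" by (rule cost_meas[OF prof hF XF])
    have DM: "D \<in> borel_measurable M" by (rule measurable_from_subalg[OF subMF DF])
    have DN: "D \<in> borel_measurable N" by (rule measurable_from_subalg[OF subNF DF])
    have YM: "(\<lambda>\<omega>. cost k (h j \<omega>) (X j \<omega>)) \<in> borel_measurable M" by (rule measurable_from_subalg[OF subMF YF])
    have Y1M: "(\<lambda>\<omega>. cost k (h (Suc j) \<omega>) (X (Suc j) \<omega>)) \<in> borel_measurable M"
    proof (rule cost_meas[OF prof])
      show "(\<lambda>\<omega>. h (Suc j) \<omega>) \<in> borel_measurable M"
        unfolding h_def by (rule dsms_h_meas) (use U_rv in auto)
      show "(\<lambda>\<omega>. X (Suc j) \<omega>) \<in> borel_measurable M"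
        unfolding X_def by (rule dsms_X_meas[OF prof]) (use U_rv I_rv in auto)
    qed
    define B where "B = real (CARD('n) * CARD('n)) * k 0"
    have costB: "\<bar>cost k hh XX\<bar> \<le> B" for hh and XX :: "('d::euclidean_space)^('n::{finite,linorder})"
      using cost_le[OF prof, of hh XX] cost_nonneg[OF prof, of hh XX] unfolding B_def by simp
    have DB: "AE \<omega> in M. \<bar>D \<omega>\<bar> \<le> B \<and> \<bar>U j \<omega>\<bar> \<le> 1"
      using good
    proof eventually_elim
      case (elim \<omega>)
      have hbw: "hmin \<le> h j \<omega>" "h j \<omega> \<le> hmax" using hb[OF elim] by auto
      note dlb = dl_bounds[OF hmin hmm hbw \<nu>_nonneg[rule_format, of j]]
      have "\<bar>dl hmin hmax (\<nu> j) (h j \<omega>)\<bar> \<le> 1" using dlb by simp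
      moreover have "\<bar>slope k' (h j \<omega>) (X j \<omega>)\<bar> \<le> B" using slope_bound[OF prof] unfolding B_def by blast
      moreover have "0 \<le> B" unfolding B_def using prof_k_nonneg[OF prof, of 0] by simp
      ultimately have "\<bar>D \<omega>\<bar> \<le> 1 * B" unfolding D_def abs_mult by (intro mult_mono) auto
      moreover have "\<bar>U j \<omega>\<bar> \<le> 1" using elim[rule_format, of j] by auto
      ultimately show ?case by simp
    qed
    have Yi: "integrable M (\<lambda>\<omega>. cost k (h j \<omega>) (X j \<omega>))"
      by (rule integrable_const_bound[where B=B]) (use costB YM in auto)
    have Y1i: "integrable M (\<lambda>\<omega>. cost k (h (Suc j) \<omega>) (X (Suc j) \<omega>))"
      by (rule integrable_const_bound[where B=B]) (use costB Y1M in auto)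
    have DVi: "integrable M (\<lambda>\<omega>. D \<omega> * U j \<omega>)"
    proof (rule integrable_const_bound[where B=B])
      show "AE \<omega> in M. norm (D \<omega> * U j \<omega>) \<le> B"
        using DB
      proof eventually_elim
        case (elim \<omega>)
        have "\<bar>D \<omega>\<bar> * \<bar>U j \<omega>\<bar> \<le> B * 1" using elim by (intro mult_mono) auto
        thus ?case by (simp add: abs_mult)
      qed
      have [measurable]: "U j \<in> borel_measurable M" using U_rv by simp
      show "(\<lambda>\<omega>. D \<omega> * U j \<omega>) \<in> borel_measurable M" using DM by measurable
    qed
    show "AE \<omega> in M. cost k (h j \<omega>) (X j \<omega>) \<le> real_cond_exp M F (\<lambda>\<omega>. cost k (h (Suc j) \<omega>) (X (Suc j) \<omega>)) \<omega>"
    proof (rule cond_exp_ge[OF sfs Y1i YF Yi DVi])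
      fix A assume A: "A \<in> sets F"
      have AN: "A \<in> sets N" using A subF by auto
      have gN: "(\<lambda>\<omega>. indicator A \<omega> * D \<omega>) \<in> borel_measurable N" using AN DN by measurable
      have gi: "integrable M (\<lambda>\<omega>. indicator A \<omega> * D \<omega>)"
      proof (rule integrable_const_bound[where B=B])
        show "AE \<omega> in M. norm (indicator A \<omega> * D \<omega>) \<le> B"
          using DB by eventually_elim (auto simp: indicator_def)
        show "(\<lambda>\<omega>. indicator A \<omega> * D \<omega>) \<in> borel_measurable M" by (rule measurable_from_subalg[OF _ gN]) (use subN spN in \<open>auto simp: subalgebra_def\<close>)
      qed
      have "(\<integral>\<omega>. indicator A \<omega> * (D \<omega> * U j \<omega>) \<partial>M) = (\<integral>\<omega>. (indicator A \<omega> * D \<omega>) * U j \<omega> \<partial>M)"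
        by (simp add: mult.assoc)
      also have "\<dots> = (\<integral>\<omega>. indicator A \<omega> * D \<omega> \<partial>M) * (\<integral>\<omega>. U j \<omega> \<partial>M)" by (rule indN[OF gN gi])
      also have "\<dots> = 0" using Uf(3) by simp
      finally show "(\<integral>\<omega>. indicator A \<omega> * (D \<omega> * U j \<omega>) \<partial>M) = 0" .
    next
      show "AE \<omega> in M. cost k (h j \<omega>) (X j \<omega>) + D \<omega> * U j \<omega> \<le> cost k (h (Suc j) \<omega>) (X (Suc j) \<omega>)"
        using good
      proof eventually_elim
        case (elim \<omega>)
        have hbw: "hmin \<le> h j \<omega>" "h j \<omega> \<le> hmax" using hb[OF elim] by auto
        have uj: "\<bar>U j \<omega>\<bar> < 1" using elim by (auto simp: abs_less_iff)
        define \<alpha> where "\<alpha> = 1 + dl hmin hmax (\<nu> j) (h j \<omega>) * U j \<omega>"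
        have ap: "0 < \<alpha>" unfolding \<alpha>_def by (rule h_step(1)[OF hmin hmm hbw \<nu>_nonneg[rule_format] uj])
        have hS: "h (Suc j) \<omega> = h j \<omega> / sqrt \<alpha>" unfolding h_def \<alpha>_def by (rule dsms_h_Suc[OF j])
        have XS: "X (Suc j) \<omega> = (\<chi> jj. if jj = I j \<omega> then mean_shift k' (h (Suc j) \<omega>) (X j \<omega> $ I j \<omega>) (X j \<omega>) else X j \<omega> $ jj)"
          unfolding X_def h_def by (simp only: dsms_X.simps Let_def)
        have "cost k (h (Suc j) \<omega>) (X j \<omega>) \<le> cost k (h (Suc j) \<omega>) (X (Suc j) \<omega>)"
          unfolding XS by (rule ascent[OF prof])
        moreover have "cost k (h j \<omega>) (X j \<omega>) + (\<alpha> - 1) * slope k' (h j \<omega>) (X j \<omega>) \<le> cost k (h (Suc j) \<omega>) (X j \<omega>)"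
          unfolding hS by (rule jensen_step[OF prof ap]) (use hbw hmin in simp)
        moreover have "(\<alpha> - 1) * slope k' (h j \<omega>) (X j \<omega>) = D \<omega> * U j \<omega>"
          unfolding \<alpha>_def D_def by simp
        ultimately show ?case by simp
      qed
    qed
  qed
qed



theorem proposition2:
  fixes k k' :: "real \<Rightarrow> real"
    and hmin hmax h1 :: real
    and \<nu> :: "nat \<Rightarrow> real"
    and X0 :: "('d::euclidean_space)^('n::{finite,linorder})"
    and M :: "'a measure"
    and U :: "nat \<Rightarrow> 'a \<Rightarrow> real"
    and I :: "nat \<Rightarrow> 'a \<Rightarrow> 'n"
  defines "h \<equiv> (\<lambda>j \<omega>. dsms_h hmin hmax \<nu> h1 (\<lambda>m. U m \<omega>) j)"
    and "X \<equiv> (\<lambda>j \<omega>. dsms_X k' hmin hmax \<nu> h1 X0 (\<lambda>m. U m \<omega>) (\<lambda>m. I m \<omega>) j)"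
  assumes prof: "profile k k'"
    and hmin: "0 < hmin" and hmm: "hmin < hmax"
    and h1: "hmin \<le> h1" "h1 \<le> hmax"
    and \<nu>_nonneg: "\<forall>j. \<nu> j \<ge> 0" and \<nu>_lim: "\<nu> \<longlonglongrightarrow> 0"
    and P: "prob_space M"
    and U_rv: "\<forall>j. U j \<in> borel_measurable M"
    and U_unif: "\<forall>j. distr M borel (U j) = uniform_measure lborel {-1<..<1}"
    and I_rv: "\<forall>j. I j \<in> measurable M (count_space UNIV)"
    and I_unif: "\<forall>j i. prob_space.prob M {\<omega> \<in> space M. I j \<omega> = i} = 1 / real CARD('n)"
    and U_indep: "prob_space.indep_vars M (\<lambda>_. borel) U UNIV"
    and I_indep: "prob_space.indep_vars M (\<lambda>_. count_space UNIV) I UNIV"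
    and UI_indep: "prob_space.indep_set M
                     (sets (vimage_algebra (space M) (\<lambda>\<omega> j. U j \<omega>) (Pi\<^sub>M UNIV (\<lambda>_. borel))))
                     (sets (vimage_algebra (space M) (\<lambda>\<omega> j. I j \<omega>) (Pi\<^sub>M UNIV (\<lambda>_. count_space UNIV))))"
  shows "(\<forall>j\<ge>1. AE \<omega> in M.
            real_cond_exp M
              (vimage_algebra (space M) (\<lambda>\<omega>. (X j \<omega>, h j \<omega>)) borel)
              (\<lambda>\<omega>. cost k (h (Suc j) \<omega>) (X (Suc j) \<omega>)) \<omega>
            \<ge> cost k (h j \<omega>) (X j \<omega>))
       \<and> (\<forall>j \<omega>. cost k (h j \<omega>) (X j \<omega>) \<ge> 0)
       \<and> submartingale_from M 1
           (\<lambda>j. vimage_algebra (space M) (\<lambda>\<omega>. \<lambda>i\<in>{..j}. (X i \<omega>, h i \<omega>))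
                  (Pi\<^sub>M {..j} (\<lambda>_. borel)))
           (\<lambda>j \<omega>. cost k (h j \<omega>) (X j \<omega>))"
proof -
  interpret prob_space M by (rule P)
  have hd: "h = (\<lambda>j \<omega>. dsms_h hmin hmax \<nu> h1 (\<lambda>m. U m \<omega>) j)" unfolding h_def ..
  have Xd: "X = (\<lambda>j \<omega>. dsms_X k' hmin hmax \<nu> h1 X0 (\<lambda>m. U m \<omega>) (\<lambda>m. I m \<omega>) j)" unfolding X_def ..
  note MS = main_step[OF hd Xd prof hmin hmm h1 \<nu>_nonneg P U_rv U_unif I_rv U_indep UI_indep]
  have hM: "(\<lambda>\<omega>. h i \<omega>) \<in> borel_measurable M" for i
    unfolding hd by (rule dsms_h_meas) (use U_rv in auto)
  have XM: "(\<lambda>\<omega>. X i \<omega>) \<in> borel_measurable M" for i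
    unfolding Xd by (rule dsms_X_meas[OF prof]) (use U_rv I_rv in auto)
  have ZM: "(\<lambda>\<omega>. (X i \<omega>, h i \<omega>)) \<in> borel_measurable M" for i
  proof -
    have "(\<lambda>\<omega>. (X i \<omega>, h i \<omega>)) \<in> measurable M (borel \<Otimes>\<^sub>M borel)"
      by (rule measurable_Pair[OF XM hM])
    thus ?thesis by (simp add: borel_prod)
  qed
  define W where "W = (\<lambda>j \<omega>. \<lambda>i\<in>{..j}. (X i \<omega>, h i \<omega>))"
  define Fs where "Fs = (\<lambda>j. vimage_algebra (space M) (W j) (Pi\<^sub>M {..j} (\<lambda>_. borel::((('d::euclidean_space)^('n::{finite,linorder})) \<times> real) measure)))"
  have spFs: "space (Fs j) = space M" for j unfolding Fs_def by simp
  have WFs: "W j \<in> measurable (Fs j) (Pi\<^sub>M {..j} (\<lambda>_. borel))" for j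
    unfolding Fs_def by (rule measurable_vimage_algebra1) (auto simp: W_def space_PiM)
  have ZFs: "(\<lambda>\<omega>. (X i \<omega>, h i \<omega>)) \<in> borel_measurable (Fs j)" if "i \<le> j" for i j
  proof -
    have "(\<lambda>\<omega>. W j \<omega> i) \<in> borel_measurable (Fs j)"
      using measurable_compose[OF WFs measurable_component_singleton[of i "{..j}" "\<lambda>_. borel::((('d::euclidean_space)^('n::{finite,linorder})) \<times> real) measure"]]
        that by (simp add: comp_def)
    moreover have "W j \<omega> i = (X i \<omega>, h i \<omega>)" for \<omega> unfolding W_def using that by simp
    ultimately show ?thesis by simp
  qed
  have YFs: "(\<lambda>\<omega>. cost k (h j \<omega>) (X j \<omega>)) \<in> borel_measurable (Fs j)" for j
  proof -
    have Z': "(\<lambda>\<omega>. (X j \<omega>, h j \<omega>)) \<in> measurable (Fs j) (borel \<Otimes>\<^sub>M borel)"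
      using ZFs[of j j] by (simp add: borel_prod)
    have a: "(\<lambda>\<omega>. X j \<omega>) \<in> borel_measurable (Fs j)"
      using measurable_compose[OF Z' measurable_fst] by (simp add: comp_def)
    have b: "(\<lambda>\<omega>. h j \<omega>) \<in> borel_measurable (Fs j)"
      using measurable_compose[OF Z' measurable_snd] by (simp add: comp_def)
    show ?thesis by (rule cost_meas[OF prof b a])
  qed
  have WM: "W j \<in> measurable M (Pi\<^sub>M {..j} (\<lambda>_. borel))" for j
    unfolding W_def by (rule measurable_restrict) (rule ZM)
  have subFs: "sets (Fs j) \<subseteq> sets M" for j
    unfolding Fs_def by (rule sets_image_in_sets[OF refl WM])
  have cint: "integrable M (\<lambda>\<omega>. cost k (h j \<omega>) (X j \<omega>))" for j
  proof (rule integrable_const_bound[where B="real (CARD('n) * CARD('n)) * k 0"])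
    show "AE \<omega> in M. norm (cost k (h j \<omega>) (X j \<omega>)) \<le> real (CARD('n) * CARD('n)) * k 0"
    proof (rule AE_I2)
      fix \<omega>
      have "cost k (h j \<omega>) (X j \<omega>) \<le> real (CARD('n) * CARD('n)) * k 0" by (rule cost_le[OF prof])
      moreover have "0 \<le> cost k (h j \<omega>) (X j \<omega>)" by (rule cost_nonneg[OF prof])
      ultimately show "norm (cost k (h j \<omega>) (X j \<omega>)) \<le> real (CARD('n) * CARD('n)) * k 0" by simp
    qed
    show "(\<lambda>\<omega>. cost k (h j \<omega>) (X j \<omega>)) \<in> borel_measurable M"
      by (rule cost_meas[OF prof hM XM])
  qed
  have C1: "\<forall>j\<ge>1. AE \<omega> in M.
            real_cond_exp M
              (vimage_algebra (space M) (\<lambda>\<omega>. (X j \<omega>, h j \<omega>)) borel)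
              (\<lambda>\<omega>. cost k (h (Suc j) \<omega>) (X (Suc j) \<omega>)) \<omega>
            \<ge> cost k (h j \<omega>) (X j \<omega>)"
  proof (intro allI impI)
    fix j :: nat assume j: "j \<ge> 1"
    obtain N where spN: "space N = space M" and subN: "sets N \<subseteq> sets M"
      and ZN: "\<And>i. i \<le> j \<Longrightarrow> (\<lambda>\<omega>. (X i \<omega>, h i \<omega>)) \<in> borel_measurable N"
      and key: "\<And>F. space F = space M \<Longrightarrow> sets F \<subseteq> sets N \<Longrightarrow> (\<lambda>\<omega>. (X j \<omega>, h j \<omega>)) \<in> borel_measurable F \<Longrightarrow>
       AE \<omega> in M. cost k (h j \<omega>) (X j \<omega>) \<le> real_cond_exp M F (\<lambda>\<omega>. cost k (h (Suc j) \<omega>) (X (Suc j) \<omega>)) \<omega>"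
      by (rule MS[OF j]) blast
    show "AE \<omega> in M. real_cond_exp M (vimage_algebra (space M) (\<lambda>\<omega>. (X j \<omega>, h j \<omega>)) borel)
              (\<lambda>\<omega>. cost k (h (Suc j) \<omega>) (X (Suc j) \<omega>)) \<omega> \<ge> cost k (h j \<omega>) (X j \<omega>)"
    proof (rule key)
      show "space (vimage_algebra (space M) (\<lambda>\<omega>. (X j \<omega>, h j \<omega>)) borel) = space M" by simp
      show "sets (vimage_algebra (space M) (\<lambda>\<omega>. (X j \<omega>, h j \<omega>)) borel) \<subseteq> sets N"
        by (rule sets_image_in_sets[OF spN ZN]) simp
      show "(\<lambda>\<omega>. (X j \<omega>, h j \<omega>)) \<in> borel_measurable (vimage_algebra (space M) (\<lambda>\<omega>. (X j \<omega>, h j \<omega>)) borel)"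
        by (rule measurable_vimage_algebra1) simp
    qed
  qed
  have C2: "\<forall>j \<omega>. cost k (h j \<omega>) (X j \<omega>) \<ge> 0" using cost_nonneg[OF prof] by auto
  have C3: "submartingale_from M 1 Fs (\<lambda>j \<omega>. cost k (h j \<omega>) (X j \<omega>))"
    unfolding submartingale_from_def
  proof (intro conjI allI impI)
    fix j :: nat assume j: "j \<ge> 1"
    show "sigma_finite_subalgebra M (Fs j)"
      by (rule prob_sfs[OF P]) (use spFs subFs in \<open>auto simp: subalgebra_def\<close>)
    have Fsj: "Fs j = vimage_algebra (space M) (W j) (Pi\<^sub>M {..j} (\<lambda>_. borel))" unfolding Fs_def ..
    show "sets (Fs j) \<subseteq> sets (Fs (Suc j))"
      unfolding Fsj
    proof (rule sets_image_in_sets)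
      show "space (Fs (Suc j)) = space M" by (rule spFs)
      have "(\<lambda>\<omega>. restrict (W (Suc j) \<omega>) {..j}) \<in> measurable (Fs (Suc j)) (Pi\<^sub>M {..j} (\<lambda>_. borel::((('d::euclidean_space)^('n::{finite,linorder})) \<times> real) measure))"
        using measurable_compose[OF WFs measurable_restrict_subset[of "{..j}" "{..Suc j}"]] by (simp add: comp_def)
      moreover have "restrict (W (Suc j) \<omega>) {..j} = W j \<omega>" for \<omega>
        unfolding W_def by (auto simp: restrict_def fun_eq_iff)
      ultimately show "W j \<in> measurable (Fs (Suc j)) (Pi\<^sub>M {..j} (\<lambda>_. borel))" by simp
    qed
    show "(\<lambda>\<omega>. cost k (h j \<omega>) (X j \<omega>)) \<in> borel_measurable (Fs j)" by (rule YFs)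
    show "integrable M (\<lambda>\<omega>. cost k (h j \<omega>) (X j \<omega>))" by (rule cint)
    obtain N where spN: "space N = space M" and subN: "sets N \<subseteq> sets M"
      and ZN: "\<And>i. i \<le> j \<Longrightarrow> (\<lambda>\<omega>. (X i \<omega>, h i \<omega>)) \<in> borel_measurable N"
      and key: "\<And>F. space F = space M \<Longrightarrow> sets F \<subseteq> sets N \<Longrightarrow> (\<lambda>\<omega>. (X j \<omega>, h j \<omega>)) \<in> borel_measurable F \<Longrightarrow>
       AE \<omega> in M. cost k (h j \<omega>) (X j \<omega>) \<le> real_cond_exp M F (\<lambda>\<omega>. cost k (h (Suc j) \<omega>) (X (Suc j) \<omega>)) \<omega>"
      by (rule MS[OF j]) blast
    show "AE \<omega> in M. cost k (h j \<omega>) (X j \<omega>) \<le> real_cond_exp M (Fs j) (\<lambda>\<omega>. cost k (h (Suc j) \<omega>) (X (Suc j) \<omega>)) \<omega>"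
    proof (rule key[OF spFs])
      have "W j \<in> measurable N (Pi\<^sub>M {..j} (\<lambda>_. borel))"
        unfolding W_def by (rule measurable_restrict) (use ZN in auto)
      thus "sets (Fs j) \<subseteq> sets N" unfolding Fs_def by (rule sets_image_in_sets[OF spN])
      show "(\<lambda>\<omega>. (X j \<omega>, h j \<omega>)) \<in> borel_measurable (Fs j)" by (rule ZFs) simp
    qed
  qed
  show ?thesis using C1 C2 C3 unfolding Fs_def W_def by blast
qed

end
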